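(* There is $\varepsilon_0>0$ such that the following holds. Let $\Sigma$ be a $C^2$-smooth curve in $\mathbb{T}^2$. There is $C_\Sigma$ such that for every $0<\varepsilon\le\varepsilon_0$ and every $E=\lambda^2\in\mathbb{Z}_{>0}$ satisfying $$\min_{x\ne y\in\mathbb{Z}^2,\ |x|=\lambda=|y|}|x-y|>\lambda^{1-\varepsilon},$$ every eigenfunction $\varphi_\lambda$ with eigenvalue $E$ satisfies $\|\varphi_\lambda\|_{L^2(\Sigma)}\le C_\Sigma\|\varphi_\lambda\|_{L^2(\mathbb{T}^2)}$.
   Context: $\mathbb{T}^2=\mathbb{R}^2/\mathbb{Z}^2$; $\Sigma$ is a compact $C^2$ curve with arc-length measure. An eigenfunction with eigenvalue $E$ is $\varphi(x)=\sum_{\xi\in\mathbb{Z}^2,|\xi|^2=E}a_\xi e^{2\pi i x\cdot\xi}$. *)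

theory Defs
  imports "HOL-Analysis.Analysis"
begin

text \<open>Points of the torus are represented by points of the plane (functions below are
  Z^2-periodic). Lattice points are pairs of integers.\<close>

definition dotZ :: "real \<times> real \<Rightarrow> int \<times> int \<Rightarrow> real" where
  "dotZ x \<xi> = fst x * of_int (fst \<xi>) + snd x * of_int (snd \<xi>)"

definition normsqZ :: "int \<times> int \<Rightarrow> int" where
  "normsqZ \<xi> = (fst \<xi>)\<^sup>2 + (snd \<xi>)\<^sup>2"

definition latt_circle :: "nat \<Rightarrow> (int \<times> int) set" where
  "latt_circle E = {\<xi>. normsqZ \<xi> = int E}"

definition eigfun :: "nat \<Rightarrow> (int \<times> int \<Rightarrow> complex) \<Rightarrow> real \<times> real \<Rightarrow> complex" where
  "eigfun E a x = (\<Sum>\<xi>\<in>latt_circle E. a \<xi> * exp (2 * of_real pi * \<i> * of_real (dotZ x \<xi>)))"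

text \<open>A compact regular C^2 curve, parametrised on [0,1] (projected to the torus).\<close>
definition C2_curve :: "(real \<Rightarrow> real \<times> real) \<Rightarrow> bool" where
  "C2_curve \<gamma> \<longleftrightarrow> (\<exists>\<gamma>' \<gamma>''.
     (\<forall>t\<in>{0..1}. (\<gamma> has_vector_derivative \<gamma>' t) (at t within {0..1})
                 \<and> (\<gamma>' has_vector_derivative \<gamma>'' t) (at t within {0..1})
                 \<and> \<gamma>' t \<noteq> 0)
     \<and> continuous_on {0..1} \<gamma>'')"

definition L2_curve :: "(real \<Rightarrow> real \<times> real) \<Rightarrow> (real \<times> real \<Rightarrow> complex) \<Rightarrow> real" where
  "L2_curve \<gamma> f = sqrt (integral {0..1}
      (\<lambda>t. (cmod (f (\<gamma> t)))\<^sup>2 * norm (vector_derivative \<gamma> (at t within {0..1}))))"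

definition L2_torus :: "(real \<times> real \<Rightarrow> complex) \<Rightarrow> real" where
  "L2_torus f = sqrt (integral (cbox (0,0) (1,1)) (\<lambda>x. (cmod (f x))\<^sup>2))"

end

theory Submission
  imports Defs
begin


lemma hvd_exp_lin:
  "((\<lambda>t. exp (\<i> * of_real (c + \<beta> * t))) has_vector_derivative
      (\<i> * of_real \<beta> * exp (\<i> * of_real (c + \<beta> * t)))) (at t within s)"
proof -
  have "((\<lambda>z. exp (\<i> * (of_real c + of_real \<beta> * z))) has_field_derivative
      (\<i> * of_real \<beta> * exp (\<i> * (of_real c + of_real \<beta> * of_real t)))) (at (of_real t))"
    by (auto intro!: derivative_eq_intros simp: algebra_simps)
  from has_vector_derivative_real_field[OF this, of s] show ?thesis by simp
qed

lemma exp_i_lip: "cmod (exp(\<i> * of_real a) - exp(\<i> * of_real b)) \<le> \<bar>a - b\<bar>"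
proof -
  have "norm ((\<lambda>t. exp(\<i> * of_real (0 + 1 * t))) a - (\<lambda>t. exp(\<i> * of_real (0 + 1 * t))) b) \<le> 1 * norm (a - b)"
  proof (rule differentiable_bound[where S=UNIV and f'="\<lambda>t h. h *\<^sub>R (\<i> * of_real 1 * exp(\<i> * of_real (0 + 1 * t)))"])
    fix x :: real
    show "((\<lambda>t. exp(\<i> * of_real (0 + 1 * t))) has_derivative (\<lambda>h. h *\<^sub>R (\<i> * of_real 1 * exp(\<i> * of_real (0 + 1 * x))))) (at x within UNIV)"
      using hvd_exp_lin[of 0 1 x UNIV] by (simp add: has_vector_derivative_def)
    show "onorm (\<lambda>h. h *\<^sub>R (\<i> * of_real 1 * exp(\<i> * of_real (0 + 1 * x)))) \<le> 1"
      by (rule onorm_le) (simp add: norm_mult)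
  qed auto
  then show ?thesis by simp
qed

lemma integral_bound_real:
  fixes f :: "real \<Rightarrow> 'b::real_normed_vector"
  assumes "f integrable_on {a..b}" "a \<le> b" "0 \<le> B" "\<And>x. x \<in> {a..b} \<Longrightarrow> norm (f x) \<le> B"
  shows "norm (integral {a..b} f) \<le> B * (b - a)"
  using has_integral_bound_real[of B "{}" f "integral {a..b} f" a b] assms
  by (auto simp: integrable_integral)

lemma exp_lin_has_integral:
  assumes "a \<le> b" "\<beta> \<noteq> 0"
  shows "((\<lambda>t. exp (\<i> * of_real (c + \<beta> * t))) has_integral
     (exp (\<i> * of_real (c + \<beta> * b)) - exp (\<i> * of_real (c + \<beta> * a))) / (\<i> * of_real \<beta>)) {a..b}"
proof -
  have "((\<lambda>t. exp (\<i> * of_real (c + \<beta> * t)) / (\<i> * of_real \<beta>)) has_vector_derivative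
      exp (\<i> * of_real (c + \<beta> * t))) (at t within {a..b})" for t
  proof -
    have "((\<lambda>z. exp (\<i> * (of_real c + of_real \<beta> * z)) / (\<i> * of_real \<beta>)) has_field_derivative
      (exp (\<i> * (of_real c + of_real \<beta> * of_real t)))) (at (of_real t))"
      using assms by (auto intro!: derivative_eq_intros simp: field_simps)
    from has_vector_derivative_real_field[OF this, of "{a..b}"] show ?thesis by simp
  qed
  then have "((\<lambda>t. exp (\<i> * of_real (c + \<beta> * t))) has_integral
     (\<lambda>t. exp (\<i> * of_real (c + \<beta> * t)) / (\<i> * of_real \<beta>)) b -
     (\<lambda>t. exp (\<i> * of_real (c + \<beta> * t)) / (\<i> * of_real \<beta>)) a) {a..b}"
    by (intro fundamental_theorem_of_calculus[OF assms(1)]) auto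
  then show ?thesis by (simp add: diff_divide_distrib)
qed

lemma exp_lin_integral_bound:
  assumes "a \<le> b"
  shows "cmod (integral {a..b} (\<lambda>t. exp (\<i> * of_real (c + \<beta> * t)))) \<le> b - a"
    and "\<beta> \<noteq> 0 \<Longrightarrow> cmod (integral {a..b} (\<lambda>t. exp (\<i> * of_real (c + \<beta> * t)))) \<le> 2 / \<bar>\<beta>\<bar>"
proof -
  have ii: "(\<lambda>t. exp (\<i> * of_real (c + \<beta> * t))) integrable_on {a..b}"
    by (intro integrable_continuous_interval continuous_intros)
  show "cmod (integral {a..b} (\<lambda>t. exp (\<i> * of_real (c + \<beta> * t)))) \<le> b - a"
    using integral_bound_real[OF ii assms, of 1] by simp
  assume "\<beta> \<noteq> 0"
  from integral_unique[OF exp_lin_has_integral[OF assms this, of c]]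
  have "cmod (integral {a..b} (\<lambda>t. exp (\<i> * of_real (c + \<beta> * t)))) =
     cmod (exp (\<i> * of_real (c + \<beta> * b)) - exp (\<i> * of_real (c + \<beta> * a))) / \<bar>\<beta>\<bar>"
    by (simp add: norm_divide norm_mult)
  also have "\<dots> \<le> 2 / \<bar>\<beta>\<bar>"
    using norm_triangle_ineq4[of "exp (\<i> * of_real (c + \<beta> * b))" "exp (\<i> * of_real (c + \<beta> * a))"]
    by (intro divide_right_mono) auto
  finally show "cmod (integral {a..b} (\<lambda>t. exp (\<i> * of_real (c + \<beta> * t)))) \<le> 2 / \<bar>\<beta>\<bar>" .
qed



definition ev :: "int \<times> int \<Rightarrow> real \<times> real \<Rightarrow> complex" where
  "ev w x = exp (\<i> * of_real (2 * pi * dotZ x w))"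

lemma eigfun_ev: "eigfun E a x = (\<Sum>\<xi>\<in>latt_circle E. a \<xi> * ev \<xi> x)"
  unfolding eigfun_def ev_def by (simp add: mult.commute mult.left_commute)

lemma dotZ_diff: "dotZ x (\<xi> - \<eta>) = dotZ x \<xi> - dotZ x \<eta>"
  by (simp add: dotZ_def algebra_simps)

lemma cnj_exp_i: "cnj (exp (\<i> * of_real t)) = exp (\<i> * of_real (- t))"
  by (simp add: exp_cnj)

lemma exp_i_add: "exp (\<i> * of_real a) * exp (\<i> * of_real b) = exp (\<i> * of_real (a + b))"
  by (simp add: exp_add[symmetric] distrib_left)

lemma ev_mult_cnj: "ev \<xi> x * cnj (ev \<eta> x) = ev (\<xi> - \<eta>) x"
  unfolding ev_def dotZ_diff cnj_exp_i exp_i_add by (simp add: algebra_simps)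

lemma abs_le_sq_int: "\<bar>x::int\<bar> \<le> x\<^sup>2"
proof (cases "x = 0")
  case False
  then have "\<bar>x\<bar> * 1 \<le> \<bar>x\<bar> * \<bar>x\<bar>" by (intro mult_left_mono) auto
  then show ?thesis by (simp add: power2_eq_square abs_mult[symmetric])
qed simp

lemma ev_zero[simp]: "ev 0 x = 1"
  by (simp add: ev_def dotZ_def)

lemma continuous_on_ev[continuous_intros]: "continuous_on S (ev w)"
  unfolding ev_def dotZ_def by (intro continuous_intros)

lemma finite_latt_circle: "finite (latt_circle E)"
proof -
  have "latt_circle E \<subseteq> {-int E..int E} \<times> {-int E..int E}"
  proof
    fix \<xi> assume "\<xi> \<in> latt_circle E"
    then have h: "(fst \<xi>)\<^sup>2 + (snd \<xi>)\<^sup>2 = int E" by (simp add: latt_circle_def normsqZ_def)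
    have "\<bar>fst \<xi>\<bar> \<le> (fst \<xi>)\<^sup>2" "\<bar>snd \<xi>\<bar> \<le> (snd \<xi>)\<^sup>2"
      by (rule abs_le_sq_int)+
    moreover have "(fst \<xi>)\<^sup>2 \<le> int E" "(snd \<xi>)\<^sup>2 \<le> int E"
      using h zero_le_power2[of "fst \<xi>"] zero_le_power2[of "snd \<xi>"] by linarith+
    ultimately show "\<xi> \<in> {-int E..int E} \<times> {-int E..int E}"
      by (cases \<xi>) auto
  qed
  then show ?thesis by (rule finite_subset) auto
qed

lemma sq_expand:
  "complex_of_real ((cmod (eigfun E a x))\<^sup>2) =
     (\<Sum>\<xi>\<in>latt_circle E. \<Sum>\<eta>\<in>latt_circle E. a \<xi> * cnj (a \<eta>) * ev (\<xi> - \<eta>) x)"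
  unfolding complex_norm_square eigfun_ev
  by (simp add: sum_product cnj_sum ev_mult_cnj[symmetric] algebra_simps)

lemma int1d: "integral {0..1} (\<lambda>t. exp (\<i> * of_real (2 * pi * of_int k * t))) = (if k = 0 then 1 else 0)"
proof (cases "k = 0")
  case False
  then have "2 * pi * of_int k \<noteq> 0" by simp
  from integral_unique[OF exp_lin_has_integral[OF _ this, of 0 1 0]] show ?thesis
    using False by (simp add: mult.commute mult.left_commute)
qed simp

lemma int_torus_ev: "integral (cbox (0,0) (1,1)) (ev w) = (if w = 0 then 1 else 0)"
proof -
  have e: "ev w (x, y) = exp (\<i> * of_real (2 * pi * of_int (fst w) * x)) * exp (\<i> * of_real (2 * pi * of_int (snd w) * y))" for x y
    unfolding ev_def dotZ_def by (simp add: exp_add[symmetric] algebra_simps)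
  have "integral (cbox (0,0) (1,1)) (ev w) = integral (cbox 0 1) (\<lambda>x. integral (cbox 0 1) (\<lambda>y. ev w (x, y)))"
    by (rule integral_prod_continuous) (intro continuous_intros)
  also have "\<dots> = integral {0..1} (\<lambda>x. exp (\<i> * of_real (2 * pi * of_int (fst w) * x)) * (if snd w = 0 then 1 else 0))"
    unfolding e cbox_interval by (simp only: integral_mult_right int1d)
  also have "\<dots> = (if fst w = 0 then 1 else 0) * (if snd w = 0 then 1 else 0)"
    by (simp only: integral_mult_left int1d)
  also have "\<dots> = (if w = 0 then 1 else 0)"
    by (cases w) (auto simp: zero_prod_def)
  finally show ?thesis .
qed

lemma L2_torus_eq: "L2_torus (eigfun E a) = sqrt (\<Sum>\<xi>\<in>latt_circle E. (cmod (a \<xi>))\<^sup>2)"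
proof -
  let ?S = "latt_circle E"
  have cont: "continuous_on (cbox (0,0) (1,1)) (\<lambda>x. (cmod (eigfun E a x))\<^sup>2)"
    unfolding eigfun_ev by (intro continuous_intros)
  have "complex_of_real (integral (cbox (0,0) (1,1)) (\<lambda>x. (cmod (eigfun E a x))\<^sup>2)) =
        integral (cbox (0,0) (1,1)) (\<lambda>x. complex_of_real ((cmod (eigfun E a x))\<^sup>2))"
    by (rule integral_unique[symmetric], rule has_integral_of_real, rule integrable_integral,
        rule integrable_continuous[OF cont])
  also have "\<dots> = (\<Sum>\<xi>\<in>?S. \<Sum>\<eta>\<in>?S. a \<xi> * cnj (a \<eta>) * integral (cbox (0,0) (1,1)) (ev (\<xi> - \<eta>)))"
    unfolding sq_expand
    by (subst integral_sum, simp add: finite_latt_circle,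
        intro integrable_sum finite_latt_circle integrable_continuous continuous_intros)
       (subst integral_sum, auto simp: finite_latt_circle intro!: integrable_continuous continuous_intros)
  also have "\<dots> = (\<Sum>\<xi>\<in>?S. a \<xi> * cnj (a \<xi>))"
    unfolding int_torus_ev by (simp add: if_distrib finite_latt_circle sum.delta sum.delta' cong: if_cong) 
  also have "\<dots> = complex_of_real (\<Sum>\<xi>\<in>?S. (cmod (a \<xi>))\<^sup>2)"
    by (simp only: of_real_sum complex_norm_square)
  finally show ?thesis unfolding L2_torus_def by (simp only: of_real_eq_iff)
qed



lemma spread:
  fixes X :: "real set"
  shows "finite X \<Longrightarrow> X \<noteq> {} \<Longrightarrow> (\<forall>x\<in>X. \<forall>y\<in>X. x \<noteq> y \<longrightarrow> d < \<bar>x - y\<bar>) \<Longrightarrow>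
    d * (real (card X) - 1) \<le> Max X - Min X"
proof (induction "card X" arbitrary: X)
  case 0 then show ?case by simp
next
  case (Suc n)
  define m where "m = Max X"
  define Y where "Y = X - {m}"
  have mX: "m \<in> X" unfolding m_def using Suc by simp
  show ?case
  proof (cases "Y = {}")
    case True
    then have "X = {m}" using mX unfolding Y_def by auto
    then show ?thesis by simp
  next
    case False
    have fY: "finite Y" using Suc unfolding Y_def by simp
    have cY: "card Y = n" using Suc mX unfolding Y_def by simp
    have IH: "d * (real (card Y) - 1) \<le> Max Y - Min Y"
      using Suc.hyps(1)[OF cY[symmetric] fY False] Suc.prems(3) unfolding Y_def by auto
    have MY: "Max Y \<in> Y" using fY False by simp
    then have "Max Y \<le> m" "Max Y \<noteq> m" unfolding m_def Y_def using Suc by auto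
    moreover have "d < \<bar>Max Y - m\<bar>" using Suc.prems(3) MY mX \<open>Max Y \<noteq> m\<close> unfolding Y_def by auto
    ultimately have g: "d < m - Max Y" by auto
    have "Min X \<le> Min Y" using Suc False fY unfolding Y_def by (auto intro!: Min_antimono)
    have "card X = card Y + 1" using Suc cY by simp
    then show ?thesis using IH g \<open>Min X \<le> Min Y\<close> unfolding m_def by (simp add: algebra_simps)
  qed
qed

lemma card_gap:
  fixes X :: "real set"
  assumes "finite X" "X \<subseteq> {c - T..c + T}" "0 < d" "0 \<le> T"
    "\<forall>x\<in>X. \<forall>y\<in>X. x \<noteq> y \<longrightarrow> d < \<bar>x - y\<bar>"
  shows "real (card X) \<le> 2 * T / d + 1"
proof (cases "X = {}")
  case False
  have "Max X \<in> X" "Min X \<in> X" using assms False by auto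
  then have "Max X \<le> c + T" "c - T \<le> Min X" using assms(2) by auto
  then have "Max X - Min X \<le> 2 * T" by linarith
  with spread[OF assms(1) False assms(5)] have "d * (real (card X) - 1) \<le> 2 * T" by simp
  then show ?thesis using assms(3) by (simp add: field_simps)
qed (use assms in \<open>simp\<close>)

lemma sq_diff_le:
  fixes a b :: real
  assumes "0 \<le> a * b"
  shows "(a - b)\<^sup>2 \<le> \<bar>a\<^sup>2 - b\<^sup>2\<bar>"
proof -
  have "(a - b)\<^sup>2 = \<bar>a - b\<bar> * \<bar>a - b\<bar>" by (simp add: power2_eq_square)
  also have "\<dots> \<le> \<bar>a - b\<bar> * \<bar>a + b\<bar>"
    using assms by (intro mult_left_mono) (auto simp: abs_if zero_le_mult_iff split: if_splits)
  also have "\<dots> = \<bar>a\<^sup>2 - b\<^sup>2\<bar>" by (simp add: power2_eq_square abs_mult[symmetric] algebra_simps)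
  finally show ?thesis .
qed

definition sv :: "real \<Rightarrow> real \<Rightarrow> int \<times> int \<Rightarrow> real" where
  "sv v1 v2 \<eta> = real_of_int (fst \<eta>) * v1 + real_of_int (snd \<eta>) * v2"
definition su :: "real \<Rightarrow> real \<Rightarrow> int \<times> int \<Rightarrow> real" where
  "su v1 v2 \<eta> = - real_of_int (fst \<eta>) * v2 + real_of_int (snd \<eta>) * v1"

lemma sv_diff: "sv v1 v2 (x - y) = sv v1 v2 x - sv v1 v2 y"
  by (simp add: sv_def algebra_simps)
lemma su_diff: "su v1 v2 (x - y) = su v1 v2 x - su v1 v2 y"
  by (simp add: su_def algebra_simps)

lemma sv_su_norm: "v1\<^sup>2 + v2\<^sup>2 = 1 \<Longrightarrow> (sv v1 v2 x)\<^sup>2 + (su v1 v2 x)\<^sup>2 = real_of_int (normsqZ x)"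
proof -
  assume h: "v1\<^sup>2 + v2\<^sup>2 = 1"
  have "(sv v1 v2 x)\<^sup>2 + (su v1 v2 x)\<^sup>2 = ((real_of_int (fst x))\<^sup>2 + (real_of_int (snd x))\<^sup>2) * (v1\<^sup>2 + v2\<^sup>2)"
    by (simp add: sv_def su_def power2_eq_square algebra_simps)
  then show ?thesis using h by (simp add: normsqZ_def)
qed

lemma half_count:
  assumes v: "v1\<^sup>2 + v2\<^sup>2 = 1" and D: "0 < D" "D \<le> R" and R: "R\<^sup>2 = real E" "0 < R"
    and sep: "\<forall>x\<in>latt_circle E. \<forall>y\<in>latt_circle E. x \<noteq> y \<longrightarrow> D\<^sup>2 < real_of_int (normsqZ (x - y))"
    and T: "0 \<le> T"
    and A: "A \<subseteq> {\<eta>\<in>latt_circle E. \<bar>sv v1 v2 \<eta> - c\<bar> \<le> T}"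
    and sgn: "\<forall>x\<in>A. \<forall>y\<in>A. 0 \<le> su v1 v2 x * su v1 v2 y"
  shows "real (card A) \<le> 16 * T * R / D\<^sup>2 + 1"
proof -
  define d where "d = D\<^sup>2 / (8 * R)"
  have d0: "0 < d" using D R by (simp add: d_def)
  have dD: "d \<le> D / 8" using D R unfolding d_def by (simp add: field_simps power2_eq_square mult_right_mono)
  have fA: "finite A" using A finite_subset[OF _ finite_latt_circle] by blast
  have gap: "d < \<bar>sv v1 v2 x - sv v1 v2 y\<bar>" if xy: "x \<in> A" "y \<in> A" "x \<noteq> y" for x y
  proof (rule ccontr)
    assume "\<not> ?thesis"
    then have le: "\<bar>sv v1 v2 x - sv v1 v2 y\<bar> \<le> d" by simp
    have nx: "(sv v1 v2 x)\<^sup>2 + (su v1 v2 x)\<^sup>2 = R\<^sup>2" "(sv v1 v2 y)\<^sup>2 + (su v1 v2 y)\<^sup>2 = R\<^sup>2"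
      using sv_su_norm[OF v] xy A R by (auto simp: latt_circle_def)
    have bx: "\<bar>sv v1 v2 x\<bar> \<le> R" "\<bar>sv v1 v2 y\<bar> \<le> R"
    proof -
      have "(sv v1 v2 x)\<^sup>2 \<le> R\<^sup>2" "(sv v1 v2 y)\<^sup>2 \<le> R\<^sup>2"
        using nx zero_le_power2[of "su v1 v2 x"] zero_le_power2[of "su v1 v2 y"] by linarith+
      then have "\<bar>sv v1 v2 x\<bar> \<le> \<bar>R\<bar>" "\<bar>sv v1 v2 y\<bar> \<le> \<bar>R\<bar>" by (simp_all only: abs_le_square_iff)
      then show "\<bar>sv v1 v2 x\<bar> \<le> R" "\<bar>sv v1 v2 y\<bar> \<le> R" using R by auto
    qed
    have "(su v1 v2 x - su v1 v2 y)\<^sup>2 \<le> \<bar>(su v1 v2 x)\<^sup>2 - (su v1 v2 y)\<^sup>2\<bar>"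
      using sgn xy by (intro sq_diff_le) auto
    also have "\<dots> = \<bar>(sv v1 v2 x)\<^sup>2 - (sv v1 v2 y)\<^sup>2\<bar>" using nx by (smt (verit))
    also have "\<dots> = \<bar>sv v1 v2 x - sv v1 v2 y\<bar> * \<bar>sv v1 v2 x + sv v1 v2 y\<bar>"
      by (simp add: power2_eq_square abs_mult[symmetric] algebra_simps)
    also have "\<dots> \<le> d * (2 * R)"
      using le bx by (intro mult_mono) auto
    finally have su_le: "(su v1 v2 x - su v1 v2 y)\<^sup>2 \<le> d * (2 * R)" .
    have sv_le: "(sv v1 v2 x - sv v1 v2 y)\<^sup>2 \<le> d\<^sup>2"
      using le by (metis abs_le_square_iff abs_of_pos d0)
    have "real_of_int (normsqZ (x - y)) = (sv v1 v2 x - sv v1 v2 y)\<^sup>2 + (su v1 v2 x - su v1 v2 y)\<^sup>2"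
      using sv_su_norm[OF v, of "x - y"] by (simp add: sv_diff su_diff)
    also have "\<dots> \<le> d\<^sup>2 + d * (2 * R)" using su_le sv_le by simp
    also have "\<dots> \<le> D\<^sup>2"
    proof -
      have "d\<^sup>2 \<le> (D / 8)\<^sup>2" using dD d0 by (intro power_mono) auto
      moreover have "d * (2 * R) = D\<^sup>2 / 4" using R unfolding d_def by (simp add: field_simps)
      moreover have "(D / 8)\<^sup>2 = D\<^sup>2 / 64" by (simp add: power2_eq_square)
      ultimately show ?thesis using zero_le_power2[of D] by linarith
    qed
    finally show False using sep xy A by force
  qed
  let ?X = "sv v1 v2 ` A"
  have inj: "inj_on (sv v1 v2) A"
    unfolding inj_on_def using gap d0 by (metis abs_zero diff_self not_less_iff_gr_or_eq)
  have "real (card ?X) \<le> 2 * T / d + 1"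
  proof (rule card_gap[OF _ _ d0 T])
    show "finite ?X" using fA by simp
    show "?X \<subseteq> {c - T..c + T}"
    proof
      fix s assume "s \<in> ?X"
      then obtain \<eta> where "\<eta> \<in> A" "s = sv v1 v2 \<eta>" by blast
      with A have "\<bar>s - c\<bar> \<le> T" by blast
      then show "s \<in> {c - T..c + T}" by auto
    qed
    show "\<forall>x\<in>?X. \<forall>y\<in>?X. x \<noteq> y \<longrightarrow> d < \<bar>x - y\<bar>" using gap by auto
  qed
  moreover have "2 * T / d = 16 * T * R / D\<^sup>2" unfolding d_def using D R by (simp add: field_simps)
  ultimately show ?thesis using card_image[OF inj] by simp
qed

lemma count_strip:
  assumes v: "v1\<^sup>2 + v2\<^sup>2 = 1" and D: "0 < D" "D \<le> R" and R: "R\<^sup>2 = real E" "0 < R"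
    and sep: "\<forall>x\<in>latt_circle E. \<forall>y\<in>latt_circle E. x \<noteq> y \<longrightarrow> D\<^sup>2 < real_of_int (normsqZ (x - y))"
    and T: "0 \<le> T"
  shows "real (card {\<eta>\<in>latt_circle E. \<bar>sv v1 v2 \<eta> - c\<bar> \<le> T}) \<le> 32 * T * R / D\<^sup>2 + 2"
proof -
  let ?A = "{\<eta>\<in>latt_circle E. \<bar>sv v1 v2 \<eta> - c\<bar> \<le> T}"
  let ?P = "{\<eta>\<in>?A. 0 \<le> su v1 v2 \<eta>}" and ?N = "{\<eta>\<in>?A. su v1 v2 \<eta> < 0}"
  have e: "?A = ?P \<union> ?N" by (auto simp del: mem_Collect_eq)
  have "card ?A = card (?P \<union> ?N)" using e by (rule arg_cong)
  also have "\<dots> \<le> card ?P + card ?N" by (rule card_Un_le)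
  finally have c: "card ?A \<le> card ?P + card ?N" .
  have P: "real (card ?P) \<le> 16 * T * R / D\<^sup>2 + 1"
  proof (rule half_count[OF v D R sep T])
    show "?P \<subseteq> ?A" by blast
    show "\<forall>x\<in>?P. \<forall>y\<in>?P. 0 \<le> su v1 v2 x * su v1 v2 y"
      by (intro ballI mult_nonneg_nonneg) simp_all
  qed
  have N: "real (card ?N) \<le> 16 * T * R / D\<^sup>2 + 1"
  proof (rule half_count[OF v D R sep T])
    show "?N \<subseteq> ?A" by blast
    show "\<forall>x\<in>?N. \<forall>y\<in>?N. 0 \<le> su v1 v2 x * su v1 v2 y"
      by (intro ballI mult_nonpos_nonpos) simp_all
  qed
  have c': "real (card ?A) \<le> real (card ?P) + real (card ?N)" using c by linarith
  have "32 * T * R / D\<^sup>2 + 2 = (16 * T * R / D\<^sup>2 + 1) + (16 * T * R / D\<^sup>2 + 1)" by simp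
  with c' P N show ?thesis by linarith
qed



lemma dotZ_add: "dotZ (x + y) w = dotZ x w + dotZ y w"
  by (simp add: dotZ_def algebra_simps)
lemma dotZ_diff1: "dotZ (x - y) w = dotZ x w - dotZ y w"
  by (simp add: dotZ_def algebra_simps)
lemma dotZ_scale: "dotZ (s *\<^sub>R x) w = s * dotZ x w"
  by (simp add: dotZ_def algebra_simps)
lemma dotZ_neg: "dotZ x (- w) = - dotZ x w"
  by (simp add: dotZ_def algebra_simps)

lemma dotZ_bound: "\<bar>dotZ y w\<bar> \<le> norm y * sqrt (real_of_int (normsqZ w))"
proof -
  obtain a b where y: "y = (a, b)" by (cases y)
  define c where "c = real_of_int (fst w)"
  define d where "d = real_of_int (snd w)"
  have "(a * c + b * d)\<^sup>2 \<le> (a\<^sup>2 + b\<^sup>2) * (c\<^sup>2 + d\<^sup>2)"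
  proof -
    have "0 \<le> (a * d - b * c)\<^sup>2" by simp
    then show ?thesis by (simp add: power2_eq_square algebra_simps)
  qed
  then have "sqrt ((a * c + b * d)\<^sup>2) \<le> sqrt ((a\<^sup>2 + b\<^sup>2) * (c\<^sup>2 + d\<^sup>2))"
    by (rule real_sqrt_le_mono)
  then show ?thesis
    by (simp add: y dotZ_def norm_Pair normsqZ_def c_def d_def real_sqrt_mult)
qed

lemma ev_lip: "cmod (ev w x - ev w y) \<le> 2 * pi * \<bar>dotZ (x - y) w\<bar>"
proof -
  have "cmod (ev w x - ev w y) \<le> \<bar>2 * pi * dotZ x w - 2 * pi * dotZ y w\<bar>"
    unfolding ev_def by (rule exp_i_lip)
  also have "\<dots> = 2 * pi * \<bar>dotZ (x - y) w\<bar>"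
    by (simp add: dotZ_diff1 abs_mult right_diff_distrib[symmetric])
  finally show ?thesis .
qed

lemma norm_ev[simp]: "cmod (ev w x) = 1"
  by (simp add: ev_def)

locale c2 =
  fixes g g1 g2 :: "real \<Rightarrow> real \<times> real" and Mx m K :: real
  assumes d1: "\<And>t. t \<in> {0..1} \<Longrightarrow> (g has_vector_derivative g1 t) (at t within {0..1})"
    and d2: "\<And>t. t \<in> {0..1} \<Longrightarrow> (g1 has_vector_derivative g2 t) (at t within {0..1})"
    and Mx: "\<And>t. t \<in> {0..1} \<Longrightarrow> norm (g1 t) \<le> Mx"
    and mpos: "0 < m" and mle: "\<And>t. t \<in> {0..1} \<Longrightarrow> m \<le> norm (g1 t)"
    and K: "\<And>t. t \<in> {0..1} \<Longrightarrow> norm (g2 t) \<le> K"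
begin

lemma cont_g: "continuous_on {0..1} g"
  using d1 has_vector_derivative_continuous continuous_on_eq_continuous_within by blast
lemma cont_g1: "continuous_on {0..1} g1"
  using d2 has_vector_derivative_continuous continuous_on_eq_continuous_within by blast

lemma K0: "0 \<le> K" using K[of 0] by (smt (verit) atLeastAtMost_iff norm_ge_zero)
lemma Mx0: "0 \<le> Mx" using Mx[of 0] by (smt (verit) atLeastAtMost_iff norm_ge_zero)

lemma lip: "t \<in> {0..1} \<Longrightarrow> s \<in> {0..1} \<Longrightarrow> norm (g1 t - g1 s) \<le> K * \<bar>t - s\<bar>"
proof -
  assume ts: "t \<in> {0..1}" "s \<in> {0..1}"
  have "norm (g1 t - g1 s) \<le> K * norm (t - s)"
  proof (rule differentiable_bound[where S="{0..1}" and f'="\<lambda>x h. h *\<^sub>R g2 x"])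
    fix x :: real assume "x \<in> {0..1}"
    then show "(g1 has_derivative (\<lambda>h. h *\<^sub>R g2 x)) (at x within {0..1})"
      using d2 by (simp add: has_vector_derivative_def)
    show "onorm (\<lambda>h. h *\<^sub>R g2 x) \<le> K"
    proof (rule onorm_le)
      fix y :: real
      have "\<bar>y\<bar> * norm (g2 x) \<le> \<bar>y\<bar> * K" using K[OF \<open>x \<in> {0..1}\<close>] by (intro mult_left_mono) auto
      then show "norm (y *\<^sub>R g2 x) \<le> K * norm y" by (simp add: mult.commute)
    qed
  qed (use ts in auto)
  then show ?thesis by simp
qed

lemma lin:
  assumes "0 \<le> t0" "t0 \<le> t" "t \<le> t0 + h" "t0 + h \<le> 1"
  shows "norm (g t - g t0 - (t - t0) *\<^sub>R g1 t0) \<le> K * h * h"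
proof -
  have "norm (g t - g t0 - (t - t0) *\<^sub>R g1 t0) \<le> norm (t - t0) * (K * h)"
  proof (rule vector_differentiable_bound_linearization[where S="{t0..t0+h}" and f'=g1])
    fix x assume "x \<in> {t0..t0+h}"
    then have x01: "x \<in> {0..1}" using assms by auto
    show "(g has_vector_derivative g1 x) (at x within {t0..t0+h})"
      by (rule has_vector_derivative_within_subset[OF d1[OF x01]]) (use assms in auto)
    have "norm (g1 x - g1 t0) \<le> K * \<bar>x - t0\<bar>" using lip[OF x01] assms by auto
    also have "\<dots> \<le> K * h" using \<open>x \<in> {t0..t0+h}\<close> K0 by (intro mult_left_mono) auto
    finally show "norm (g1 x - g1 t0) \<le> K * h" .
  next
    show "closed_segment t0 t \<subseteq> {t0..t0 + h}" using assms by (auto simp: closed_segment_eq_real_ivl)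
  qed (use assms in auto)
  also have "\<dots> \<le> h * (K * h)" using assms K0 by (intro mult_right_mono) auto
  finally show ?thesis by (simp add: mult_ac)
qed

end



lemma continuous_on_ev_comp[continuous_intros]:
  "continuous_on S f \<Longrightarrow> continuous_on S (\<lambda>t. ev w (f t))"
  unfolding ev_def dotZ_def by (intro continuous_intros)

context c2 begin

lemma Kbound:
  assumes t0: "0 \<le> t0" "0 < h" "t0 + h \<le> 1" and Tt: "0 \<le> Tt"
  shows "cmod (integral {t0..t0+h} (\<lambda>t. ev w (g t) * of_real (norm (g1 t)))) \<le>
     h * (K * h + Mx * (2 * pi) * (K * h * h) * sqrt (real_of_int (normsqZ w))) +
     Mx * (if \<bar>dotZ (g1 t0) w\<bar> \<le> Tt then h else 1 / (pi * \<bar>dotZ (g1 t0) w\<bar>))"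
proof -
  define nw where "nw = sqrt (real_of_int (normsqZ w))"
  have nw0: "0 \<le> nw" unfolding nw_def normsqZ_def by simp
  define c where "c = 2 * pi * (dotZ (g t0) w - t0 * dotZ (g1 t0) w)"
  define \<beta> where "\<beta> = 2 * pi * dotZ (g1 t0) w"
  define F where "F t = ev w (g t) * of_real (norm (g1 t))" for t
  define G where "G t = of_real (norm (g1 t0)) * exp (\<i> * of_real (c + \<beta> * t))" for t
  have Pin: "{t0..t0+h} \<subseteq> {0..1}" using t0 by auto
  have t001: "t0 \<in> {0..1}" using t0 by auto
  have lin_eq: "ev w (g t0 + (t - t0) *\<^sub>R g1 t0) = exp (\<i> * of_real (c + \<beta> * t))" for t
    unfolding ev_def c_def \<beta>_def dotZ_add dotZ_scale by (simp add: algebra_simps)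
  have contF: "continuous_on {t0..t0+h} F"
    unfolding F_def using continuous_on_subset[OF cont_g Pin] continuous_on_subset[OF cont_g1 Pin]
    by (intro continuous_intros) auto
  have contG: "continuous_on {t0..t0+h} G"
    unfolding G_def by (intro continuous_intros)
  have iF: "F integrable_on {t0..t0+h}" by (rule integrable_continuous_interval[OF contF])
  have iG: "G integrable_on {t0..t0+h}" by (rule integrable_continuous_interval[OF contG])
  have pw: "cmod (F t - G t) \<le> K * h + Mx * (2 * pi) * (K * h * h) * nw" if t: "t \<in> {t0..t0+h}" for t
  proof -
    have t01: "t \<in> {0..1}" using t Pin by auto
    have "F t - G t = ev w (g t) * of_real (norm (g1 t) - norm (g1 t0)) +
        of_real (norm (g1 t0)) * (ev w (g t) - ev w (g t0 + (t - t0) *\<^sub>R g1 t0))"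
      unfolding F_def G_def lin_eq by (simp add: algebra_simps)
    then have "cmod (F t - G t) \<le> \<bar>norm (g1 t) - norm (g1 t0)\<bar> +
        norm (g1 t0) * cmod (ev w (g t) - ev w (g t0 + (t - t0) *\<^sub>R g1 t0))"
      using norm_triangle_ineq[of "ev w (g t) * of_real (norm (g1 t) - norm (g1 t0))"
          "of_real (norm (g1 t0)) * (ev w (g t) - ev w (g t0 + (t - t0) *\<^sub>R g1 t0))"]
      by (simp add: norm_mult of_real_diff[symmetric] del: of_real_diff)
    also have "\<bar>norm (g1 t) - norm (g1 t0)\<bar> \<le> K * h"
    proof -
      have "\<bar>norm (g1 t) - norm (g1 t0)\<bar> \<le> norm (g1 t - g1 t0)" by (rule norm_triangle_ineq3)
      also have "\<dots> \<le> K * \<bar>t - t0\<bar>" by (rule lip[OF t01 t001])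
      also have "\<dots> \<le> K * h" using t K0 by (intro mult_left_mono) auto
      finally show ?thesis .
    qed
    also have "cmod (ev w (g t) - ev w (g t0 + (t - t0) *\<^sub>R g1 t0)) \<le> (2 * pi) * (K * h * h) * nw"
    proof -
      have "cmod (ev w (g t) - ev w (g t0 + (t - t0) *\<^sub>R g1 t0)) \<le>
          2 * pi * \<bar>dotZ (g t - (g t0 + (t - t0) *\<^sub>R g1 t0)) w\<bar>" by (rule ev_lip)
      also have "\<dots> \<le> 2 * pi * (norm (g t - (g t0 + (t - t0) *\<^sub>R g1 t0)) * nw)"
        unfolding nw_def by (intro mult_left_mono dotZ_bound) auto
      also have "\<dots> \<le> 2 * pi * ((K * h * h) * nw)"
        using lin[of t0 t h] t t0 nw0 by (intro mult_left_mono mult_right_mono) (auto simp: diff_diff_eq)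
      finally show ?thesis by (simp add: mult_ac)
    qed
    then have "norm (g1 t0) * cmod (ev w (g t) - ev w (g t0 + (t - t0) *\<^sub>R g1 t0)) \<le> Mx * ((2 * pi) * (K * h * h) * nw)"
      using Mx[OF t001] Mx0 by (intro mult_mono) auto
    finally show ?thesis by (simp add: mult_ac)
  qed
  have b1: "cmod (integral {t0..t0+h} (\<lambda>t. F t - G t)) \<le> (K * h + Mx * (2 * pi) * (K * h * h) * nw) * h"
    using integral_bound_real[OF integrable_diff[OF iF iG], of "K * h + Mx * (2 * pi) * (K * h * h) * nw"] pw t0
      K0 Mx0 nw0 by (simp add: zero_le_mult_iff)
  have b2: "cmod (integral {t0..t0+h} G) \<le> Mx * (if \<bar>dotZ (g1 t0) w\<bar> \<le> Tt then h else 1 / (pi * \<bar>dotZ (g1 t0) w\<bar>))"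
  proof -
    have "cmod (integral {t0..t0+h} G) = norm (g1 t0) * cmod (integral {t0..t0+h} (\<lambda>t. exp (\<i> * of_real (c + \<beta> * t))))"
      unfolding G_def by (simp add: norm_mult)
    also have "\<dots> \<le> Mx * (if \<bar>dotZ (g1 t0) w\<bar> \<le> Tt then h else 1 / (pi * \<bar>dotZ (g1 t0) w\<bar>))"
    proof (rule mult_mono[OF Mx[OF t001]])
      show "cmod (integral {t0..t0+h} (\<lambda>t. exp (\<i> * of_real (c + \<beta> * t)))) \<le>
          (if \<bar>dotZ (g1 t0) w\<bar> \<le> Tt then h else 1 / (pi * \<bar>dotZ (g1 t0) w\<bar>))"
      proof (cases "\<bar>dotZ (g1 t0) w\<bar> \<le> Tt")
        case True
        then show ?thesis using exp_lin_integral_bound(1)[of t0 "t0+h" c \<beta>] t0 by simp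
      next
        case False
        then have "\<beta> \<noteq> 0" using Tt unfolding \<beta>_def by auto
        from exp_lin_integral_bound(2)[of t0 "t0+h" \<beta> c, OF _ this] t0
        have "cmod (integral {t0..t0+h} (\<lambda>t. exp (\<i> * of_real (c + \<beta> * t)))) \<le> 2 / \<bar>\<beta>\<bar>" by simp
        also have "2 / \<bar>\<beta>\<bar> = 1 / (pi * \<bar>dotZ (g1 t0) w\<bar>)" unfolding \<beta>_def by (simp add: abs_mult)
        finally show ?thesis using False by simp
      qed
    qed (use Mx0 in auto)
    finally show ?thesis .
  qed
  have "integral {t0..t0+h} F = integral {t0..t0+h} (\<lambda>t. F t - G t) + integral {t0..t0+h} G"
    using integral_diff[OF iF iG] by simp
  then have "cmod (integral {t0..t0+h} F) \<le> cmod (integral {t0..t0+h} (\<lambda>t. F t - G t)) + cmod (integral {t0..t0+h} G)"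
    by (simp add: norm_triangle_ineq)
  also have "\<dots> \<le> h * (K * h + Mx * (2 * pi) * (K * h * h) * nw) +
     Mx * (if \<bar>dotZ (g1 t0) w\<bar> \<le> Tt then h else 1 / (pi * \<bar>dotZ (g1 t0) w\<bar>))"
    using b1 b2 by (simp add: mult.commute)
  finally show ?thesis unfolding F_def nw_def .
qed

end



lemma schur:
  fixes f :: "int \<times> int \<Rightarrow> real" and B :: "int \<times> int \<Rightarrow> real"
  assumes "finite S" "\<And>x. 0 \<le> f x" "\<And>w. 0 \<le> B w" "\<And>w. B (- w) = B w"
    "\<And>x. x \<in> S \<Longrightarrow> (\<Sum>y\<in>S. B (x - y)) \<le> Q"
  shows "(\<Sum>x\<in>S. \<Sum>y\<in>S. f x * f y * B (x - y)) \<le> Q * (\<Sum>x\<in>S. (f x)\<^sup>2)"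
proof -
  have "(\<Sum>x\<in>S. \<Sum>y\<in>S. f x * f y * B (x - y)) \<le> (\<Sum>x\<in>S. \<Sum>y\<in>S. ((f x)\<^sup>2 + (f y)\<^sup>2) / 2 * B (x - y))"
  proof (intro sum_mono mult_right_mono assms(3))
    fix x y
    have "0 \<le> (f x - f y)\<^sup>2" by simp
    then show "f x * f y \<le> ((f x)\<^sup>2 + (f y)\<^sup>2) / 2" by (simp add: power2_eq_square algebra_simps)
  qed
  also have "\<dots> = (\<Sum>x\<in>S. \<Sum>y\<in>S. (f x)\<^sup>2 / 2 * B (x - y)) + (\<Sum>x\<in>S. \<Sum>y\<in>S. (f y)\<^sup>2 / 2 * B (x - y))"
    by (simp add: add_divide_distrib distrib_right sum.distrib)
  also have "(\<Sum>x\<in>S. \<Sum>y\<in>S. (f y)\<^sup>2 / 2 * B (x - y)) = (\<Sum>y\<in>S. \<Sum>x\<in>S. (f y)\<^sup>2 / 2 * B (y - x))"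
  proof -
    have "(\<Sum>x\<in>S. \<Sum>y\<in>S. (f y)\<^sup>2 / 2 * B (x - y)) = (\<Sum>y\<in>S. \<Sum>x\<in>S. (f y)\<^sup>2 / 2 * B (x - y))"
      by (rule sum.swap)
    also have "\<dots> = (\<Sum>y\<in>S. \<Sum>x\<in>S. (f y)\<^sup>2 / 2 * B (y - x))"
    proof (intro sum.cong refl)
      fix x y
      have "B (x - y) = B (y - x)" by (metis assms(4) minus_diff_eq)
      then show "(f y)\<^sup>2 / 2 * B (x - y) = (f y)\<^sup>2 / 2 * B (y - x)" by simp
    qed
    finally show ?thesis .
  qed
  also have "(\<Sum>x\<in>S. \<Sum>y\<in>S. (f x)\<^sup>2 / 2 * B (x - y)) + (\<Sum>y\<in>S. \<Sum>x\<in>S. (f y)\<^sup>2 / 2 * B (y - x))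
      = (\<Sum>x\<in>S. (f x)\<^sup>2 * (\<Sum>y\<in>S. B (x - y)))"
  proof -
    have a: "(\<Sum>x\<in>S. \<Sum>y\<in>S. (f x)\<^sup>2 / 2 * B (x - y)) = (\<Sum>x\<in>S. (f x)\<^sup>2 / 2 * (\<Sum>y\<in>S. B (x - y)))"
      by (simp add: sum_distrib_left)
    have b: "(\<Sum>x\<in>S. (f x)\<^sup>2 / 2 * (\<Sum>y\<in>S. B (x - y))) + (\<Sum>x\<in>S. (f x)\<^sup>2 / 2 * (\<Sum>y\<in>S. B (x - y)))
        = (\<Sum>x\<in>S. (f x)\<^sup>2 * (\<Sum>y\<in>S. B (x - y)))"
      by (simp add: sum.distrib[symmetric])
    show ?thesis using a b by simp
  qed
  also have "\<dots> \<le> (\<Sum>x\<in>S. (f x)\<^sup>2 * Q)"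
    by (intro sum_mono mult_left_mono assms(5)) auto
  finally show ?thesis by (simp add: sum_distrib_left mult.commute)
qed

context c2 begin

lemma piece:
  assumes t0: "0 \<le> t0" "0 < h" "t0 + h \<le> 1"
    and Bb: "\<And>w. cmod (integral {t0..t0+h} (\<lambda>t. ev w (g t) * of_real (norm (g1 t)))) \<le> B w"
  shows "integral {t0..t0+h} (\<lambda>t. (cmod (eigfun E a (g t)))\<^sup>2 * norm (g1 t)) \<le>
    (\<Sum>\<xi>\<in>latt_circle E. \<Sum>\<eta>\<in>latt_circle E. cmod (a \<xi>) * cmod (a \<eta>) * B (\<xi> - \<eta>))"
proof -
  let ?S = "latt_circle E"
  have Pin: "{t0..t0+h} \<subseteq> {0..1}" using t0 by auto
  have cg: "continuous_on {t0..t0+h} g" "continuous_on {t0..t0+h} g1"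
    using continuous_on_subset[OF cont_g Pin] continuous_on_subset[OF cont_g1 Pin] by auto
  have cont: "continuous_on {t0..t0+h} (\<lambda>t. (cmod (eigfun E a (g t)))\<^sup>2 * norm (g1 t))"
    unfolding eigfun_ev using cg by (intro continuous_intros)
  have ie: "(\<lambda>t. ev w (g t) * of_real (norm (g1 t))) integrable_on {t0..t0+h}" for w
    using cg by (intro integrable_continuous_interval continuous_intros)
  let ?I = "integral {t0..t0+h} (\<lambda>t. (cmod (eigfun E a (g t)))\<^sup>2 * norm (g1 t))"
  have "complex_of_real ?I = integral {t0..t0+h} (\<lambda>t. complex_of_real ((cmod (eigfun E a (g t)))\<^sup>2 * norm (g1 t)))"
    by (rule integral_unique[symmetric], rule has_integral_of_real, rule integrable_integral,
        rule integrable_continuous_interval[OF cont])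
  also have "\<dots> = integral {t0..t0+h} (\<lambda>t. \<Sum>\<xi>\<in>?S. \<Sum>\<eta>\<in>?S. a \<xi> * cnj (a \<eta>) * (ev (\<xi> - \<eta>) (g t) * of_real (norm (g1 t))))"
    by (simp only: of_real_mult sq_expand sum_distrib_right mult.assoc)
  also have "\<dots> = (\<Sum>\<xi>\<in>?S. \<Sum>\<eta>\<in>?S. a \<xi> * cnj (a \<eta>) * integral {t0..t0+h} (\<lambda>t. ev (\<xi> - \<eta>) (g t) * of_real (norm (g1 t))))"
  proof -
    have ii: "(\<lambda>t. a \<xi> * cnj (a \<eta>) * (ev (\<xi> - \<eta>) (g t) * of_real (norm (g1 t)))) integrable_on {t0..t0+h}" for \<xi> \<eta>
      by (rule integrable_on_mult_right[OF ie])
    have "integral {t0..t0+h} (\<lambda>t. \<Sum>\<xi>\<in>?S. \<Sum>\<eta>\<in>?S. a \<xi> * cnj (a \<eta>) * (ev (\<xi> - \<eta>) (g t) * of_real (norm (g1 t))))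
      = (\<Sum>\<xi>\<in>?S. integral {t0..t0+h} (\<lambda>t. \<Sum>\<eta>\<in>?S. a \<xi> * cnj (a \<eta>) * (ev (\<xi> - \<eta>) (g t) * of_real (norm (g1 t)))))"
      by (rule integral_sum[OF finite_latt_circle]) (intro integrable_sum finite_latt_circle ii)
    also have "\<dots> = (\<Sum>\<xi>\<in>?S. \<Sum>\<eta>\<in>?S. integral {t0..t0+h} (\<lambda>t. a \<xi> * cnj (a \<eta>) * (ev (\<xi> - \<eta>) (g t) * of_real (norm (g1 t)))))"
      by (intro sum.cong refl integral_sum[OF finite_latt_circle] ii)
    finally show ?thesis by simp
  qed
  finally have eq: "complex_of_real ?I = \<dots>" .
  have "?I \<le> cmod (complex_of_real ?I)" by simp
  also have "\<dots> \<le> (\<Sum>\<xi>\<in>?S. \<Sum>\<eta>\<in>?S. cmod (a \<xi> * cnj (a \<eta>) * integral {t0..t0+h} (\<lambda>t. ev (\<xi> - \<eta>) (g t) * of_real (norm (g1 t)))))"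
    unfolding eq by (rule order_trans[OF norm_sum sum_mono], rule norm_sum)
  also have "\<dots> \<le> (\<Sum>\<xi>\<in>?S. \<Sum>\<eta>\<in>?S. cmod (a \<xi>) * cmod (a \<eta>) * B (\<xi> - \<eta>))"
    by (intro sum_mono) (simp add: norm_mult Bb mult_left_mono)
  finally show ?thesis .
qed

end



lemma sv_bound:
  assumes "v1\<^sup>2 + v2\<^sup>2 = 1" "\<eta> \<in> latt_circle E" "R\<^sup>2 = real E" "0 \<le> R"
  shows "\<bar>sv v1 v2 \<eta>\<bar> \<le> R"
proof -
  have "(sv v1 v2 \<eta>)\<^sup>2 \<le> R\<^sup>2"
  proof -
    have "(sv v1 v2 \<eta>)\<^sup>2 + (su v1 v2 \<eta>)\<^sup>2 = R\<^sup>2"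
      using sv_su_norm[OF assms(1), of \<eta>] assms(2,3) by (simp add: latt_circle_def)
    then show ?thesis using zero_le_power2[of "su v1 v2 \<eta>"] by linarith
  qed
  then show ?thesis using assms(4) by (metis abs_le_square_iff abs_of_nonneg)
qed

lemma card_S_bound:
  assumes D: "0 < D" "D \<le> R" and R: "R\<^sup>2 = real E" "0 < R"
    and sep: "\<forall>x\<in>latt_circle E. \<forall>y\<in>latt_circle E. x \<noteq> y \<longrightarrow> D\<^sup>2 < real_of_int (normsqZ (x - y))"
  shows "real (card (latt_circle E)) \<le> 32 * R * R / D\<^sup>2 + 2"
proof -
  have v: "(1::real)\<^sup>2 + 0\<^sup>2 = 1" by simp
  have "latt_circle E = {\<eta>\<in>latt_circle E. \<bar>sv 1 0 \<eta> - 0\<bar> \<le> R}"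
    using sv_bound[OF v _ R(1)] R(2) by auto
  then show ?thesis using count_strip[OF v D R sep, of R 0] R by simp
qed

lemma normsq_diff_le: "\<xi> \<in> latt_circle E \<Longrightarrow> \<eta> \<in> latt_circle E \<Longrightarrow>
  sqrt (real_of_int (normsqZ (\<xi> - \<eta>))) \<le> 2 * sqrt (real E)"
proof -
  assume a: "\<xi> \<in> latt_circle E" "\<eta> \<in> latt_circle E"
  have "normsqZ (\<xi> - \<eta>) \<le> 2 * normsqZ \<xi> + 2 * normsqZ \<eta>"
  proof -
    have "0 \<le> (fst \<xi> + fst \<eta>)\<^sup>2 + (snd \<xi> + snd \<eta>)\<^sup>2" by simp
    then show ?thesis by (simp add: normsqZ_def power2_eq_square algebra_simps)
  qed
  then have "real_of_int (normsqZ (\<xi> - \<eta>)) \<le> 4 * real E" using a by (simp add: latt_circle_def)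
  then have "sqrt (real_of_int (normsqZ (\<xi> - \<eta>))) \<le> sqrt (4 * real E)" by (rule real_sqrt_le_mono)
  then show ?thesis by (simp add: real_sqrt_mult)
qed



context c2 begin

definition Bw :: "real \<Rightarrow> real \<Rightarrow> real \<Rightarrow> int \<times> int \<Rightarrow> real" where
  "Bw t0 h Tt w = h * (K * h + Mx * (2 * pi) * (K * h * h) * sqrt (real_of_int (normsqZ w))) +
     Mx * (if \<bar>dotZ (g1 t0) w\<bar> \<le> Tt then h else 1 / (pi * \<bar>dotZ (g1 t0) w\<bar>))"

lemma normsqZ_neg: "normsqZ (- w) = normsqZ w" by (simp add: normsqZ_def)

lemma Bw_sym: "Bw t0 h Tt (- w) = Bw t0 h Tt w"
  unfolding Bw_def normsqZ_neg dotZ_neg by simp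

lemma Bw_nonneg: "0 \<le> h \<Longrightarrow> 0 \<le> Bw t0 h Tt w"
  unfolding Bw_def using K0 Mx0 by (auto intro!: add_nonneg_nonneg mult_nonneg_nonneg simp: normsqZ_def)

lemma rowsum:
  assumes t0: "t0 \<in> {0..1}" and \<rho>: "1 \<le> \<rho>" and R: "R = \<rho>^10" "R\<^sup>2 = real E"
    and sep: "\<forall>x\<in>latt_circle E. \<forall>y\<in>latt_circle E. x \<noteq> y \<longrightarrow> (\<rho>^9)\<^sup>2 < real_of_int (normsqZ (x - y))"
    and h: "0 < h" "h * \<rho>^6 \<le> 1" "1 \<le> 2 * \<rho>^6 * h"
    and \<xi>: "\<xi> \<in> latt_circle E"
  shows "(\<Sum>\<eta>\<in>latt_circle E. Bw t0 h (norm (g1 t0) * \<rho>^8) (\<xi> - \<eta>)) \<le>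
     (34 * K + 136 * pi * Mx * K + 34 * Mx + 68 * Mx / (pi * m)) * h"
proof -
  let ?S = "latt_circle E"
  define r where "r = norm (g1 t0)"
  define Tt where "Tt = r * \<rho>^8"
  define N where "N = real (card ?S)"
  have rm: "m \<le> r" unfolding r_def using mle[OF t0] .
  have r0: "0 < r" using rm mpos by simp
  have \<rho>0: "0 < \<rho>" using \<rho> by simp
  have R0: "0 < R" using R \<rho>0 by simp
  have D: "0 < \<rho>^9" "\<rho>^9 \<le> R" using \<rho> R by (auto intro: power_increasing)
  have Tt0: "0 < Tt" unfolding Tt_def using r0 \<rho>0 by simp
  have N: "N \<le> 34 * \<rho>^2"
  proof -
    have "N \<le> 32 * R * R / (\<rho>^9)\<^sup>2 + 2" unfolding N_def by (rule card_S_bound[OF D R(2) R0 sep])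
    also have "32 * R * R / (\<rho>^9)\<^sup>2 = 32 * \<rho>^2"
    proof -
      have "R * R = \<rho>^2 * (\<rho>^9)\<^sup>2" unfolding R by (simp flip: power_add power_mult)
      then show ?thesis using \<rho>0 by (simp add: field_simps)
    qed
    also have "2 \<le> 2 * \<rho>^2" using \<rho> by (simp add: one_le_power)
    finally show ?thesis by simp
  qed
  have N0: "0 \<le> N" unfolding N_def by simp
  define v1 where "v1 = fst (g1 t0) / r"
  define v2 where "v2 = snd (g1 t0) / r"
  have v: "v1\<^sup>2 + v2\<^sup>2 = 1"
  proof -
    have "r\<^sup>2 = (fst (g1 t0))\<^sup>2 + (snd (g1 t0))\<^sup>2" unfolding r_def
      by (cases "g1 t0") (simp add: norm_Pair)
    moreover have "r\<^sup>2 \<noteq> 0" using r0 by simp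
    ultimately show ?thesis unfolding v1_def v2_def
      by (simp add: power_divide add_divide_distrib[symmetric])
  qed
  have dot_sv: "dotZ (g1 t0) w = r * sv v1 v2 w" for w
    unfolding dotZ_def sv_def v1_def v2_def using r0 by (simp add: field_simps)
  define near where "near = {\<eta>\<in>?S. \<bar>dotZ (g1 t0) (\<xi> - \<eta>)\<bar> \<le> Tt}"
  have near_sub: "near \<subseteq> {\<eta>\<in>?S. \<bar>sv v1 v2 \<eta> - sv v1 v2 \<xi>\<bar> \<le> \<rho>^8}"
  proof
    fix \<eta> assume "\<eta> \<in> near"
    then have "\<eta> \<in> ?S" "r * \<bar>sv v1 v2 \<xi> - sv v1 v2 \<eta>\<bar> \<le> r * \<rho>^8"
      unfolding near_def Tt_def dot_sv sv_diff using r0 by (auto simp: abs_mult)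
    then show "\<eta> \<in> {\<eta>\<in>?S. \<bar>sv v1 v2 \<eta> - sv v1 v2 \<xi>\<bar> \<le> \<rho>^8}" using r0 by (simp add: abs_minus_commute)
  qed
  have cnear: "real (card near) \<le> 34"
  proof -
    have "real (card near) \<le> real (card {\<eta>\<in>?S. \<bar>sv v1 v2 \<eta> - sv v1 v2 \<xi>\<bar> \<le> \<rho>^8})"
      using card_mono[OF _ near_sub] finite_latt_circle by simp
    also have "\<dots> \<le> 32 * \<rho>^8 * R / (\<rho>^9)\<^sup>2 + 2"
      by (rule count_strip[OF v D R(2) R0 sep]) (use \<rho>0 in simp)
    also have "32 * \<rho>^8 * R / (\<rho>^9)\<^sup>2 = 32"
    proof -
      have "\<rho>^8 * R = (\<rho>^9)\<^sup>2" unfolding R by (simp flip: power_add power_mult)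
      then show ?thesis using \<rho>0 by (simp add: field_simps)
    qed
    finally show ?thesis by simp
  qed
  define A where "A = h * (K * h + Mx * (2 * pi) * (K * h * h) * (2 * R))"
  have pw: "Bw t0 h Tt (\<xi> - \<eta>) \<le> A + Mx * (h * (if \<eta> \<in> near then 1 else 0) + 1 / (pi * Tt))"
    if \<eta>: "\<eta> \<in> ?S" for \<eta>
  proof -
    have nw: "sqrt (real_of_int (normsqZ (\<xi> - \<eta>))) \<le> 2 * R"
      using normsq_diff_le[OF \<xi> \<eta>] R R0 by (metis real_sqrt_unique less_le)
    have "h * (K * h + Mx * (2 * pi) * (K * h * h) * sqrt (real_of_int (normsqZ (\<xi> - \<eta>)))) \<le> A"
      unfolding A_def using h K0 Mx0 nw by (intro mult_left_mono add_left_mono mult_left_mono) auto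
    moreover have "(if \<bar>dotZ (g1 t0) (\<xi> - \<eta>)\<bar> \<le> Tt then h else 1 / (pi * \<bar>dotZ (g1 t0) (\<xi> - \<eta>)\<bar>))
        \<le> h * (if \<eta> \<in> near then 1 else 0) + 1 / (pi * Tt)"
    proof (cases "\<bar>dotZ (g1 t0) (\<xi> - \<eta>)\<bar> \<le> Tt")
      case True then show ?thesis using \<eta> Tt0 unfolding near_def by simp
    next
      case False
      then have "1 / (pi * \<bar>dotZ (g1 t0) (\<xi> - \<eta>)\<bar>) \<le> 1 / (pi * Tt)"
        using Tt0 by (intro divide_left_mono mult_left_mono mult_pos_pos) auto
      then show ?thesis using False h by (simp add: near_def)
    qed
    ultimately show ?thesis unfolding Bw_def Tt_def r_def[symmetric] using Mx0
      by (smt (verit) mult_left_mono)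
  qed
  have "(\<Sum>\<eta>\<in>?S. Bw t0 h Tt (\<xi> - \<eta>)) \<le> (\<Sum>\<eta>\<in>?S. A + Mx * (h * (if \<eta> \<in> near then 1 else 0) + 1 / (pi * Tt)))"
    by (rule sum_mono) (rule pw)
  also have "\<dots> = N * A + Mx * (h * real (card near) + N / (pi * Tt))"
  proof -
    have "(\<Sum>\<eta>\<in>?S. (if \<eta> \<in> near then 1 else 0 :: real)) = real (card near)"
    proof -
      have "?S \<inter> near = near" unfolding near_def by auto
      then show ?thesis using finite_latt_circle by (simp add: sum.If_cases)
    qed
    then show ?thesis
      by (simp add: sum.distrib sum_distrib_left[symmetric] N_def field_simps)
  qed
  also have "\<dots> \<le> (34 * K + 136 * pi * Mx * K + 34 * Mx + 68 * Mx / (pi * m)) * h"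
  proof -
    have \<rho>2: "\<rho>^2 \<le> \<rho>^6" using \<rho> by (intro power_increasing) auto
    have Nh: "N * h \<le> 34" 
    proof -
      have "N * h \<le> 34 * \<rho>^2 * h" using N h by (intro mult_right_mono) auto
      also have "\<dots> \<le> 34 * (\<rho>^6 * h)" using \<rho>2 h by (simp add: mult_right_mono)
      also have "\<dots> \<le> 34" using h by (simp add: mult.commute)
      finally show ?thesis .
    qed
    have NhhR: "N * (h * h * R) \<le> 34"
    proof -
      have "N * (h * h * R) \<le> 34 * \<rho>^2 * (h * h * R)" using N h R0 by (intro mult_right_mono) auto
      also have "\<dots> = 34 * ((h * \<rho>^6) * (h * \<rho>^6))" unfolding R by (simp add: field_simps flip: power_add)
      also have "\<dots> \<le> 34 * (1 * 1)" using h by (intro mult_left_mono mult_mono) auto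
      finally show ?thesis by simp
    qed
    have NT: "N / (pi * Tt) \<le> 68 * h / (pi * m)"
    proof -
      have "N / (pi * Tt) \<le> 34 * \<rho>^2 / (pi * (m * \<rho>^8))"
        unfolding Tt_def using N N0 rm mpos \<rho>0
        by (intro frac_le mult_left_mono mult_right_mono mult_pos_pos) auto
      also have "34 * \<rho>^2 / (pi * (m * \<rho>^8)) = 34 / (pi * m * \<rho>^6)"
        using \<rho>0 mpos by (simp add: field_simps flip: power_add)
      also have "\<dots> \<le> 68 * h / (pi * m)"
        using h \<rho>0 mpos by (simp add: field_simps)
      finally show ?thesis .
    qed
    have "N * A = K * (N * h) * h + 4 * pi * Mx * K * (N * (h * h * R)) * h"
      unfolding A_def by (simp add: algebra_simps)
    also have "\<dots> \<le> K * 34 * h + 4 * pi * Mx * K * 34 * h"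
      using Nh NhhR K0 Mx0 h by (intro add_mono mult_right_mono mult_left_mono) auto
    finally have NA: "N * A \<le> K * 34 * h + 4 * pi * Mx * K * 34 * h" .
    have "Mx * (h * real (card near) + N / (pi * Tt)) \<le> Mx * (h * 34 + 68 * h / (pi * m))"
      using cnear NT Mx0 h by (intro mult_left_mono add_mono) auto
    with NA show ?thesis by (simp add: algebra_simps)
  qed
  finally show ?thesis unfolding Tt_def r_def .
qed

end



lemma integral_split_pieces:
  fixes f :: "real \<Rightarrow> real"
  assumes cont: "continuous_on {0..1} f" and M: "0 < M"
  shows "integral {0..1} f = (\<Sum>j<M. integral {real j / real M .. real j / real M + 1 / real M} f)"
proof -
  have "k \<le> M \<Longrightarrow> integral {0..real k / real M} f = (\<Sum>j<k. integral {real j / real M .. real j / real M + 1 / real M} f)" for k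
  proof (induction k)
    case 0 then show ?case by simp
  next
    case (Suc k)
    have sub: "{0..real (Suc k) / real M} \<subseteq> {0..1}" using Suc.prems M by (auto simp: field_simps)
    have int: "f integrable_on {0..real (Suc k) / real M}"
      by (rule integrable_continuous_interval[OF continuous_on_subset[OF cont sub]])
    have e: "real (Suc k) / real M = real k / real M + 1 / real M" by (simp add: add_divide_distrib)
    have "integral {0..real (Suc k) / real M} f = integral {0..real k / real M} f + integral {real k / real M..real (Suc k) / real M} f"
      by (rule Henstock_Kurzweil_Integration.integral_combine[symmetric, OF _ _ int]) (use M in \<open>auto simp: divide_right_mono\<close>)
    then show ?case using Suc by (simp only: e sum.lessThan_Suc)
  qed
  from this[of M] M show ?thesis by simp
qed

context c2 begin

lemma curve_bound:
  assumes \<rho>: "1 \<le> \<rho>" and R: "R = \<rho>^10" "R\<^sup>2 = real E"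
    and sep: "\<forall>x\<in>latt_circle E. \<forall>y\<in>latt_circle E. x \<noteq> y \<longrightarrow> (\<rho>^9)\<^sup>2 < real_of_int (normsqZ (x - y))"
    and M: "0 < M" "\<rho>^6 \<le> real M" "real M \<le> 2 * \<rho>^6"
  shows "integral {0..1} (\<lambda>t. (cmod (eigfun E a (g t)))\<^sup>2 * norm (g1 t)) \<le>
     (34 * K + 136 * pi * Mx * K + 34 * Mx + 68 * Mx / (pi * m)) * (\<Sum>\<xi>\<in>latt_circle E. (cmod (a \<xi>))\<^sup>2)"
proof -
  let ?S = "latt_circle E"
  let ?C0 = "34 * K + 136 * pi * Mx * K + 34 * Mx + 68 * Mx / (pi * m)"
  let ?F = "\<lambda>t. (cmod (eigfun E a (g t)))\<^sup>2 * norm (g1 t)"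
  define h where "h = 1 / real M"
  have h0: "0 < h" using M by (simp add: h_def)
  have \<rho>0: "0 < \<rho>" using \<rho> by simp
  have h1: "h * \<rho>^6 \<le> 1" using M unfolding h_def by (simp add: field_simps)
  have h2: "1 \<le> 2 * \<rho>^6 * h" using M unfolding h_def by (simp add: field_simps)
  have cont: "continuous_on {0..1} ?F"
    unfolding eigfun_ev using cont_g cont_g1 by (intro continuous_intros)
  have "integral {0..1} ?F = (\<Sum>j<M. integral {real j / real M .. real j / real M + h} ?F)"
    unfolding h_def by (rule integral_split_pieces[OF cont M(1)])
  also have "\<dots> \<le> (\<Sum>j<M. (?C0 * h) * (\<Sum>\<xi>\<in>?S. (cmod (a \<xi>))\<^sup>2))"
  proof (rule sum_mono)
    fix j assume j: "j \<in> {..<M}"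
    define t0 where "t0 = real j / real M"
    have t0: "0 \<le> t0" "t0 + h \<le> 1" using j M unfolding t0_def h_def
      by (auto simp: field_simps)
    have t01: "t0 \<in> {0..1}" using t0 h0 by auto
    let ?Tt = "norm (g1 t0) * \<rho>^8"
    have Tt: "0 \<le> ?Tt" using \<rho>0 by simp
    have "integral {t0..t0 + h} ?F \<le> (\<Sum>\<xi>\<in>?S. \<Sum>\<eta>\<in>?S. cmod (a \<xi>) * cmod (a \<eta>) * Bw t0 h ?Tt (\<xi> - \<eta>))"
      by (rule piece[OF t0(1) h0 t0(2)]) (unfold Bw_def, rule Kbound[OF t0(1) h0 t0(2) Tt])
    also have "\<dots> \<le> (?C0 * h) * (\<Sum>\<xi>\<in>?S. (cmod (a \<xi>))\<^sup>2)"
    proof (rule schur)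
      show "finite ?S" by (rule finite_latt_circle)
      show "0 \<le> Bw t0 h ?Tt w" for w using h0 by (simp add: Bw_nonneg)
      show "Bw t0 h ?Tt (- w) = Bw t0 h ?Tt w" for w by (rule Bw_sym)
      show "(\<Sum>\<eta>\<in>?S. Bw t0 h ?Tt (\<xi> - \<eta>)) \<le> ?C0 * h" if "\<xi> \<in> ?S" for \<xi>
        by (rule rowsum[OF t01 \<rho> R sep h0 h1 h2 that])
    qed simp
    finally show "integral {real j / real M .. real j / real M + h} ?F \<le> (?C0 * h) * (\<Sum>\<xi>\<in>?S. (cmod (a \<xi>))\<^sup>2)"
      unfolding t0_def .
  qed
  also have "\<dots> = ?C0 * (\<Sum>\<xi>\<in>?S. (cmod (a \<xi>))\<^sup>2)" using M unfolding h_def by simp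
  finally show ?thesis .
qed

end



theorem lemma12p2:
  shows "\<exists>\<epsilon>0::real. \<epsilon>0 > 0 \<and>
    (\<forall>\<gamma>. C2_curve \<gamma> \<longrightarrow>
      (\<exists>C::real. \<forall>\<epsilon>::real. \<forall>E::nat.
         0 < \<epsilon> \<longrightarrow> \<epsilon> \<le> \<epsilon>0 \<longrightarrow> 0 < E \<longrightarrow>
         (\<forall>x\<in>latt_circle E. \<forall>y\<in>latt_circle E. x \<noteq> y \<longrightarrow>
             sqrt (real_of_int (normsqZ (x - y))) > sqrt (real E) powr (1 - \<epsilon>)) \<longrightarrow>
         (\<forall>a. L2_curve \<gamma> (eigfun E a) \<le> C * L2_torus (eigfun E a))))"
proof (rule exI[of _ "1/10"], intro conjI allI impI)
  fix \<gamma> :: "real \<Rightarrow> real \<times> real"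
  assume "C2_curve \<gamma>"
  then obtain g1 g2 where d: "\<And>t. t\<in>{0..1} \<Longrightarrow> (\<gamma> has_vector_derivative g1 t) (at t within {0..1})
                 \<and> (g1 has_vector_derivative g2 t) (at t within {0..1}) \<and> g1 t \<noteq> 0"
     and c2': "continuous_on {0..1} g2"
    unfolding C2_curve_def by blast
  have cg1: "continuous_on {0..1} g1"
    using d has_vector_derivative_continuous continuous_on_eq_continuous_within by blast
  obtain tM where tM: "tM \<in> {0..1}" "\<And>t. t \<in> {0..1} \<Longrightarrow> norm (g1 t) \<le> norm (g1 tM)"
    using continuous_attains_sup[of "{0..1::real}" "\<lambda>t. norm (g1 t)"] continuous_on_norm[OF cg1]
    by auto
  obtain tm where tm: "tm \<in> {0..1}" "\<And>t. t \<in> {0..1} \<Longrightarrow> norm (g1 tm) \<le> norm (g1 t)"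
    using continuous_attains_inf[of "{0..1::real}" "\<lambda>t. norm (g1 t)"] continuous_on_norm[OF cg1]
    by auto
  obtain tK where tK: "tK \<in> {0..1}" "\<And>t. t \<in> {0..1} \<Longrightarrow> norm (g2 t) \<le> norm (g2 tK)"
    using continuous_attains_sup[of "{0..1::real}" "\<lambda>t. norm (g2 t)"] continuous_on_norm[OF c2']
    by auto
  define Mx where "Mx = norm (g1 tM)"
  define m where "m = norm (g1 tm)"
  define K where "K = norm (g2 tK)"
  interpret c2 \<gamma> g1 g2 Mx m K
  proof
    show "0 < m" unfolding m_def using d[OF tm(1)] by simp
  qed (use d tM tm tK in \<open>auto simp: Mx_def m_def K_def\<close>)
  define C0 where "C0 = 34 * K + 136 * pi * Mx * K + 34 * Mx + 68 * Mx / (pi * m)"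
  show "\<exists>C. \<forall>\<epsilon> E. 0 < \<epsilon> \<longrightarrow> \<epsilon> \<le> 1/10 \<longrightarrow> 0 < E \<longrightarrow>
         (\<forall>x\<in>latt_circle E. \<forall>y\<in>latt_circle E. x \<noteq> y \<longrightarrow>
             sqrt (real_of_int (normsqZ (x - y))) > sqrt (real E) powr (1 - \<epsilon>)) \<longrightarrow>
         (\<forall>a. L2_curve \<gamma> (eigfun E a) \<le> C * L2_torus (eigfun E a))"
  proof (intro exI[of _ "sqrt C0"] allI impI)
    fix \<epsilon> :: real and E :: nat and a
    assume \<epsilon>: "0 < \<epsilon>" "\<epsilon> \<le> 1/10" and E: "0 < E"
      and sep0: "\<forall>x\<in>latt_circle E. \<forall>y\<in>latt_circle E. x \<noteq> y \<longrightarrow>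
             sqrt (real_of_int (normsqZ (x - y))) > sqrt (real E) powr (1 - \<epsilon>)"
    define R where "R = sqrt (real E)"
    have R1: "1 \<le> R" using E unfolding R_def by simp
    define \<rho> where "\<rho> = R powr (1/10)"
    have \<rho>1: "1 \<le> \<rho>" unfolding \<rho>_def using R1 by (simp add: ge_one_powr_ge_zero)
    have \<rho>pow: "\<rho> ^ n = R powr (real n / 10)" for n :: nat
      unfolding \<rho>_def using R1 by (simp add: powr_realpow[symmetric] powr_powr)
    have R10: "R = \<rho>^10" using R1 by (simp add: \<rho>pow)
    have R2: "R\<^sup>2 = real E" unfolding R_def by simp
    have sep: "\<forall>x\<in>latt_circle E. \<forall>y\<in>latt_circle E. x \<noteq> y \<longrightarrow> (\<rho>^9)\<^sup>2 < real_of_int (normsqZ (x - y))"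
    proof (intro ballI impI)
      fix x y assume xy: "x \<in> latt_circle E" "y \<in> latt_circle E" "x \<noteq> y"
      have "\<rho>^9 = R powr (9/10)" by (simp add: \<rho>pow)
      also have "\<dots> \<le> R powr (1 - \<epsilon>)" using R1 \<epsilon> by (intro powr_mono) auto
      also have "\<dots> < sqrt (real_of_int (normsqZ (x - y)))" using sep0 xy unfolding R_def by auto
      finally have lt: "\<rho>^9 < sqrt (real_of_int (normsqZ (x - y)))" .
      have nn: "0 \<le> real_of_int (normsqZ (x - y))" by (simp add: normsqZ_def)
      have "(\<rho>^9)\<^sup>2 < (sqrt (real_of_int (normsqZ (x - y))))\<^sup>2"
        using lt \<rho>1 by (intro power_strict_mono) auto
      then show "(\<rho>^9)\<^sup>2 < real_of_int (normsqZ (x - y))" using nn by simp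
    qed
    define M where "M = nat \<lceil>\<rho>^6\<rceil>"
    have \<rho>6: "1 \<le> \<rho>^6" using \<rho>1 by (simp add: one_le_power)
    have M1: "\<rho>^6 \<le> real M" unfolding M_def using \<rho>6 by linarith
    have M2: "real M \<le> 2 * \<rho>^6" unfolding M_def using \<rho>6 by linarith
    have M0: "0 < M" using M1 \<rho>6 by simp
    have vd: "vector_derivative \<gamma> (at t within {0..1}) = g1 t" if "t \<in> {0..1}" for t
      by (rule vector_derivative_within_closed_interval) (use that d in auto)
    have "L2_curve \<gamma> (eigfun E a) =
        sqrt (integral {0..1} (\<lambda>t. (cmod (eigfun E a (\<gamma> t)))\<^sup>2 * norm (g1 t)))"
      unfolding L2_curve_def by (rule arg_cong[where f=sqrt], rule integral_cong) (simp add: vd)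
    also have "\<dots> \<le> sqrt (C0 * (\<Sum>\<xi>\<in>latt_circle E. (cmod (a \<xi>))\<^sup>2))"
      unfolding C0_def by (intro real_sqrt_le_mono curve_bound[OF \<rho>1 R10 R2 sep M0 M1 M2])
    also have "\<dots> = sqrt C0 * L2_torus (eigfun E a)"
      by (simp add: L2_torus_eq real_sqrt_mult)
    finally show "L2_curve \<gamma> (eigfun E a) \<le> sqrt C0 * L2_torus (eigfun E a)" .
  qed
qed simp


end
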